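(* For any fixed $t\in\mathbb N$, $$\|\pi_h-\pi_t\|_{\mathrm{TV}}=\mathbf E\big[\|\pi_h-\pi_t\|_{\mathrm{TV}}\big]+o_{\mathbf P}(1),$$ where $o_{\mathbf P}(1)$ denotes a term tending to $0$ in probability as $n\to\infty$ and the expectation is over the environment.
   Context: Configuration model: for each $n$, $(d_i^-)_{1\le i\le n}$, $(d_i^+)_{1\le i\le n}$ positive integers with $\sum_id_i^-=\sum_id_i^+=m$; each vertex $i\in V=\{1,\dots,n\}$ carries a set $E_i^+$ of $d_i^+$ tails and $E_i^-$ of $d_i^-$ heads; the environment $\omega$ is a uniformly random bijection from tails to heads, $\omega(e)=f$ an arc from the vertex of $e$ to that of $f$; $P(i,j)=\frac1{d_i^+}|\{e\in E_i^+:\omega(e)\in E_j^-\}|$. Standing assumption: $\min_i\min(d_i^+,d_i^-)\ge2$ and $\Delta:=\max_i\max(d_i^+,d_i^-)$ bounded uniformly in $n$. $h=\lfloor\frac{\ln n}{10\ln\Delta}\rfloor$, $\pi_0(i)=d_i^-/m$, $\pi_s=\pi_0P^s$. *)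

theory Defs
  imports "HOL-Probability.Probability"
begin

definition half_edges :: "(nat \<Rightarrow> nat) \<Rightarrow> nat \<Rightarrow> (nat \<times> nat) set" where
  "half_edges d n = {(i, k). i < n \<and> k < d i}"

text \<open>Environments: bijections from tails (out-half-edges) to heads (in-half-edges),
  made extensional so that the set is finite and the uniform law makes sense.\<close>
definition envs :: "(nat \<Rightarrow> nat) \<Rightarrow> (nat \<Rightarrow> nat) \<Rightarrow> nat \<Rightarrow> ((nat \<times> nat) \<Rightarrow> (nat \<times> nat)) set" where
  "envs dout din n = {\<omega>. bij_betw \<omega> (half_edges dout n) (half_edges din n)
                          \<and> \<omega> \<in> extensional (half_edges dout n)}"

definition num_arcs :: "(nat \<Rightarrow> nat) \<Rightarrow> nat \<Rightarrow> nat" where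
  "num_arcs d n = (\<Sum>i<n. d i)"

definition trans_P :: "(nat \<Rightarrow> nat) \<Rightarrow> (nat \<Rightarrow> nat) \<Rightarrow> nat \<Rightarrow> ((nat \<times> nat) \<Rightarrow> (nat \<times> nat))
    \<Rightarrow> nat \<Rightarrow> nat \<Rightarrow> real" where
  "trans_P dout din n \<omega> i j =
     real (card {e \<in> half_edges dout n. fst e = i \<and> \<omega> e \<in> half_edges din n \<and> fst (\<omega> e) = j})
     / real (dout i)"

fun pi_s :: "(nat \<Rightarrow> nat) \<Rightarrow> (nat \<Rightarrow> nat) \<Rightarrow> nat \<Rightarrow> ((nat \<times> nat) \<Rightarrow> (nat \<times> nat))
    \<Rightarrow> nat \<Rightarrow> nat \<Rightarrow> real" where
  "pi_s dout din n \<omega> 0 j = real (din j) / real (num_arcs din n)"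
| "pi_s dout din n \<omega> (Suc s) j = (\<Sum>i<n. pi_s dout din n \<omega> s i * trans_P dout din n \<omega> i j)"

definition tv_dist :: "nat \<Rightarrow> (nat \<Rightarrow> real) \<Rightarrow> (nat \<Rightarrow> real) \<Rightarrow> real" where
  "tv_dist n \<mu> \<nu> = (1/2) * (\<Sum>j<n. \<bar>\<mu> j - \<nu> j\<bar>)"

definition max_deg :: "(nat \<Rightarrow> nat) \<Rightarrow> (nat \<Rightarrow> nat) \<Rightarrow> nat \<Rightarrow> nat" where
  "max_deg dout din n = Max ((\<lambda>i. max (dout i) (din i)) ` {..<n})"

definition hor :: "(nat \<Rightarrow> nat) \<Rightarrow> (nat \<Rightarrow> nat) \<Rightarrow> nat \<Rightarrow> nat" where
  "hor dout din n = nat \<lfloor>ln (real n) / (10 * ln (real (max_deg dout din n)))\<rfloor>"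

definition tv_ht :: "(nat \<Rightarrow> nat) \<Rightarrow> (nat \<Rightarrow> nat) \<Rightarrow> nat \<Rightarrow> nat \<Rightarrow> ((nat \<times> nat) \<Rightarrow> (nat \<times> nat)) \<Rightarrow> real" where
  "tv_ht dout din n t \<omega> =
     tv_dist n (pi_s dout din n \<omega> (hor dout din n)) (pi_s dout din n \<omega> t)"

end

theory Submission
  imports Defs "HOL-Real_Asymp.Real_Asymp"
begin


definition tr :: "'b \<Rightarrow> 'b \<Rightarrow> 'b \<Rightarrow> 'b" where
  "tr a b y = (if y = a then b else if y = b then a else y)"
definition Bij :: "'a set \<Rightarrow> 'b set \<Rightarrow> ('a \<Rightarrow> 'b) set" where
  "Bij T H = {\<omega>. bij_betw \<omega> T H \<and> \<omega> \<in> extensional T}"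
definition sw :: "'a set \<Rightarrow> 'b \<Rightarrow> 'b \<Rightarrow> ('a \<Rightarrow> 'b) \<Rightarrow> ('a \<Rightarrow> 'b)" where
  "sw T a b \<omega> = restrict (tr a b \<circ> \<omega>) T"
definition mean :: "'c set \<Rightarrow> ('c \<Rightarrow> real) \<Rightarrow> real" where
  "mean S f = sum f S / card S"
definition ss :: "'c set \<Rightarrow> ('c \<Rightarrow> real) \<Rightarrow> real" where
  "ss S f = (\<Sum>x\<in>S. (f x - mean S f)^2)"

lemma tr_bij: "a \<in> H \<Longrightarrow> b \<in> H \<Longrightarrow> bij_betw (tr a b) H H"
  unfolding bij_betw_def inj_on_def tr_def by (auto simp: image_def split: if_splits)

lemma tr_tr[simp]: "tr a b (tr a b y) = y" unfolding tr_def by auto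

lemma sw_Bij: "\<omega> \<in> Bij T H \<Longrightarrow> a \<in> H \<Longrightarrow> b \<in> H \<Longrightarrow> sw T a b \<omega> \<in> Bij T H"
proof -
  assume a: "\<omega> \<in> Bij T H" "a \<in> H" "b \<in> H"
  have "bij_betw (tr a b \<circ> \<omega>) T H"
    using a by (intro bij_betw_trans[OF _ tr_bij]) (auto simp: Bij_def)
  then have "bij_betw (restrict (tr a b \<circ> \<omega>) T) T H"
    by (rule bij_betw_cong[THEN iffD1, rotated]) simp
  then show ?thesis by (simp add: Bij_def sw_def)
qed

lemma sw_sw: "\<omega> \<in> Bij T H \<Longrightarrow> sw T a b (sw T a b \<omega>) = \<omega>"
  unfolding Bij_def sw_def extensional_def by (auto simp: fun_eq_iff)

lemma ss_decomp:
  assumes "finite S"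
  shows "(\<Sum>x\<in>S. (f x - y)^2) = ss S f + card S * (mean S f - y)^2"
proof (cases "S = {}")
  case True then show ?thesis by (simp add: ss_def)
next
  case False
  let ?m = "mean S f"
  have c: "card S > 0" using assms False by (simp add: card_gt_0_iff)
  have z: "(\<Sum>x\<in>S. f x - ?m) = 0"
    using c by (simp add: sum_subtractf mean_def)
  have "(\<Sum>x\<in>S. (f x - y)^2) = (\<Sum>x\<in>S. (f x - ?m)^2 + 2 * (?m - y) * (f x - ?m) + (?m - y)^2)"
    by (rule sum.cong) (auto simp: power2_eq_square algebra_simps)
  also have "\<dots> = ss S f + 2 * (?m - y) * (\<Sum>x\<in>S. f x - ?m) + card S * (?m - y)^2"
    by (simp add: sum.distrib sum_distrib_left ss_def)
  finally show ?thesis using z by simp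
qed

lemma ss_le: "finite S \<Longrightarrow> ss S f \<le> (\<Sum>x\<in>S. (f x - y)^2)"
  using ss_decomp[of S f y] by simp

lemma ss_image: "inj_on g A \<Longrightarrow> ss (g ` A) f = ss A (f \<circ> g)"
  unfolding ss_def mean_def by (simp add: sum.reindex card_image)

lemma mean_image: "inj_on g A \<Longrightarrow> mean (g ` A) f = mean A (f \<circ> g)"
  unfolding mean_def by (simp add: sum.reindex card_image)

lemma mean_diff:
  assumes "finite A" "c \<ge> 0" "\<And>x. x \<in> A \<Longrightarrow> \<bar>f x - g x\<bar> \<le> c"
  shows "\<bar>mean A f - mean A g\<bar> \<le> c"
proof (cases "A = {}")
  case True
  then show ?thesis using True assms(2) by (simp add: mean_def)
next
  case False
  have "\<bar>sum f A - sum g A\<bar> \<le> (\<Sum>x\<in>A. \<bar>f x - g x\<bar>)"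
    using sum_abs[of "\<lambda>x. f x - g x" A] by (simp add: sum_subtractf)
  also have "\<dots> \<le> card A * c" by (rule sum_bounded_above) (rule assms(3))
  finally have "\<bar>sum f A - sum g A\<bar> \<le> card A * c" .
  moreover have "card A > 0" using False assms(1) by (simp add: card_gt_0_iff)
  ultimately have "\<bar>sum f A - sum g A\<bar> / card A \<le> c"
    by (simp add: pos_divide_le_eq mult.commute)
  then show ?thesis unfolding mean_def
    by (simp add: diff_divide_distrib[symmetric])
qed

lemma finite_Bij: "finite T \<Longrightarrow> finite H \<Longrightarrow> finite (Bij T H)"
  by (rule finite_subset[of _ "PiE T (\<lambda>_. H)"])
     (auto simp: Bij_def bij_betw_def PiE_iff extensional_def intro: finite_PiE)

lemma Bij_upd:
  assumes "x \<notin> T" "a \<in> H" "\<psi> \<in> Bij T (H - {a})"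
  shows "\<psi>(x := a) \<in> Bij (insert x T) H"
proof -
  have b: "bij_betw \<psi> T (H - {a})" and e: "\<psi> \<in> extensional T" using assms(3) by (auto simp: Bij_def)
  have "bij_betw (\<psi>(x := a)) T (H - {a})"
    by (rule bij_betw_cong[THEN iffD1, OF _ b]) (use assms in auto)
  then have "bij_betw (\<psi>(x := a)) (T \<union> {x}) ((H - {a}) \<union> {a})"
    using notIn_Un_bij_betw3[of x T "\<psi>(x := a)" "H - {a}"] assms(1) by simp
  moreover have "(H - {a}) \<union> {a} = H" using assms(2) by auto
  moreover have "\<psi>(x := a) \<in> extensional (insert x T)" using e by (auto simp: extensional_def)
  ultimately show ?thesis by (simp add: Bij_def)
qed

lemma Bij_fiber:
  assumes "x \<notin> T" "a \<in> H"
  shows "{\<omega> \<in> Bij (insert x T) H. \<omega> x = a} = (\<lambda>\<psi>. \<psi>(x := a)) ` Bij T (H - {a})"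
proof (intro equalityI subsetI)
  fix \<omega> assume "\<omega> \<in> {\<omega> \<in> Bij (insert x T) H. \<omega> x = a}"
  then have b: "bij_betw \<omega> (insert x T) H" and e: "\<omega> \<in> extensional (insert x T)" and ax: "\<omega> x = a"
    by (auto simp: Bij_def)
  have "bij_betw \<omega> (insert x T - {x}) (H - {a})"
    by (rule bij_betw_DiffI[OF b]) (use ax assms b in \<open>auto simp: bij_betw_def\<close>)
  then have "bij_betw \<omega> T (H - {a})" using assms(1) by simp
  define \<psi> where "\<psi> = fun_upd \<omega> x undefined"
  have "bij_betw \<psi> T (H - {a})"
    by (rule bij_betw_cong[THEN iffD1, OF _ \<open>bij_betw \<omega> T (H - {a})\<close>]) (use assms in \<open>auto simp: \<psi>_def\<close>)
  moreover have "\<psi> \<in> extensional T" using e by (auto simp: extensional_def \<psi>_def)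
  ultimately have "\<psi> \<in> Bij T (H - {a})" by (simp add: Bij_def)
  moreover have "\<omega> = \<psi>(x := a)" using ax by (auto simp: \<psi>_def)
  ultimately show "\<omega> \<in> (\<lambda>\<psi>. \<psi>(x := a)) ` Bij T (H - {a})" by blast
next
  fix \<omega> assume "\<omega> \<in> (\<lambda>\<psi>. \<psi>(x := a)) ` Bij T (H - {a})"
  then show "\<omega> \<in> {\<omega> \<in> Bij (insert x T) H. \<omega> x = a}" using Bij_upd[OF assms] by auto
qed

lemma inj_upd:
  assumes "x \<notin> T" shows "inj_on (\<lambda>\<psi>. \<psi>(x := a)) (Bij T H)"
proof (rule inj_onI)
  fix \<psi> \<phi> assume "\<psi> \<in> Bij T H" "\<phi> \<in> Bij T H" "\<psi>(x := a) = \<phi>(x := a)"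
  moreover then have "\<psi> x = \<phi> x" using assms by (auto simp: Bij_def extensional_def)
  ultimately show "\<psi> = \<phi>" by (metis fun_upd_triv fun_upd_upd)
qed

lemma sw_upd:
  assumes "x \<notin> T" "a' \<noteq> a" "b' \<noteq> a"
  shows "(sw T a' b' \<psi>)(x := a) = sw (insert x T) a' b' (\<psi>(x := a))"
  using assms by (auto simp: sw_def tr_def fun_eq_iff restrict_def)

lemma sw_at: "x \<in> T \<Longrightarrow> sw T a b \<omega> x = tr a b (\<omega> x)"
  by (simp add: sw_def)

lemma var_bound:
  fixes c :: real
  assumes "finite T"
  shows "finite H \<Longrightarrow> card T = card H \<Longrightarrow> c \<ge> 0 \<Longrightarrow>
    (\<And>\<omega> a b. \<omega> \<in> Bij T H \<Longrightarrow> a \<in> H \<Longrightarrow> b \<in> H \<Longrightarrow> \<bar>f \<omega> - f (sw T a b \<omega>)\<bar> \<le> c) \<Longrightarrow>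
    ss (Bij T H) f \<le> card (Bij T H) * card T * c^2"
  using assms
proof (induction T arbitrary: H f rule: finite_induct)
  case empty
  then have "H = {}" by simp
  then have e: "Bij {} H = {\<lambda>_. undefined}" by (auto simp: Bij_def extensional_def bij_betw_def)
  show ?case unfolding ss_def mean_def e by simp
next
  case (insert x T)
  let ?T = "insert x T"
  define S where "S = Bij ?T H"
  define Sa where "Sa a = {\<omega> \<in> S. \<omega> x = a}" for a
  have fS: "finite S" unfolding S_def using insert by (simp add: finite_Bij)
  have cH: "card H = card T + 1" using insert by simp
  then obtain a0 where a0: "a0 \<in> H" by fastforce
  define y where "y = mean (Sa a0) f"
  have Sa_img: "Sa a = (\<lambda>\<psi>. \<psi>(x := a)) ` Bij T (H - {a})" if "a \<in> H" for a
    using Bij_fiber[OF insert(2) that] by (simp add: Sa_def S_def)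
  have fSa: "finite (Sa a)" for a using fS by (simp add: Sa_def)
  have ssa: "ss (Sa a) f \<le> card (Sa a) * card T * c^2" if a: "a \<in> H" for a
  proof -
    have inj: "inj_on (\<lambda>\<psi>. \<psi>(x := a)) (Bij T (H - {a}))" by (rule inj_upd[OF insert(2)])
    have "ss (Bij T (H - {a})) (f \<circ> (\<lambda>\<psi>. \<psi>(x := a))) \<le> card (Bij T (H - {a})) * card T * c^2"
    proof (rule insert.IH)
      show "finite (H - {a})" using insert by simp
      show "card T = card (H - {a})" using cH a insert by simp
      show "0 \<le> c" by fact
      fix \<psi> a' b' assume p: "\<psi> \<in> Bij T (H - {a})" "a' \<in> H - {a}" "b' \<in> H - {a}"
      have "(sw T a' b' \<psi>)(x := a) = sw ?T a' b' (\<psi>(x := a))"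
        using p insert(2) by (intro sw_upd) auto
      moreover have "\<psi>(x := a) \<in> Bij ?T H" using Bij_upd[OF insert(2) a p(1)] .
      ultimately show "\<bar>(f \<circ> (\<lambda>\<psi>. \<psi>(x := a))) \<psi> - (f \<circ> (\<lambda>\<psi>. \<psi>(x := a))) (sw T a' b' \<psi>)\<bar> \<le> c"
        using insert.prems(4) p by auto
    qed
    then show ?thesis using Sa_img[OF a] ss_image[OF inj] card_image[OF inj] by simp
  qed
  have mn: "\<bar>mean (Sa a) f - y\<bar> \<le> c" if a: "a \<in> H" for a
  proof -
    have img: "Sa a0 = sw ?T a a0 ` Sa a"
    proof (intro equalityI subsetI)
      fix \<omega> assume "\<omega> \<in> Sa a0"
      then have w: "\<omega> \<in> S" "\<omega> x = a0" by (auto simp: Sa_def)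
      then have "sw ?T a a0 \<omega> \<in> Sa a" using sw_Bij a a0 sw_at[of x ?T a a0 \<omega>]
        by (auto simp: Sa_def S_def tr_def)
      moreover have "\<omega> = sw ?T a a0 (sw ?T a a0 \<omega>)" using w sw_sw by (metis S_def)
      ultimately show "\<omega> \<in> sw ?T a a0 ` Sa a" by blast
    next
      fix \<omega> assume "\<omega> \<in> sw ?T a a0 ` Sa a"
      then obtain \<phi> where "\<phi> \<in> Sa a" "\<omega> = sw ?T a a0 \<phi>" by blast
      then show "\<omega> \<in> Sa a0" using sw_Bij a a0 sw_at[of x ?T a a0 \<phi>]
        by (auto simp: Sa_def S_def tr_def)
    qed
    have inj: "inj_on (sw ?T a a0) (Sa a)"
      by (rule inj_on_inverseI[of _ "sw ?T a a0"]) (auto simp: Sa_def S_def sw_sw)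
    have "y = mean (Sa a) (f \<circ> sw ?T a a0)" unfolding y_def img by (rule mean_image[OF inj])
    moreover have "\<bar>mean (Sa a) f - mean (Sa a) (f \<circ> sw ?T a a0)\<bar> \<le> c"
      using fSa insert.prems(3) a a0 by (intro mean_diff) (auto simp: Sa_def S_def intro!: insert.prems(4))
    ultimately show ?thesis by simp
  qed
  have "ss S f \<le> (\<Sum>\<omega>\<in>S. (f \<omega> - y)^2)" by (rule ss_le[OF fS])
  also have "\<dots> = (\<Sum>a\<in>H. \<Sum>\<omega>\<in>Sa a. (f \<omega> - y)^2)"
    unfolding Sa_def
    by (rule sum.group[symmetric]) (use fS insert.prems(1) in \<open>auto simp: S_def Bij_def bij_betw_def\<close>)
  also have "\<dots> = (\<Sum>a\<in>H. ss (Sa a) f + card (Sa a) * (mean (Sa a) f - y)^2)"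
    by (rule sum.cong) (auto simp: ss_decomp[OF fSa])
  also have "\<dots> \<le> (\<Sum>a\<in>H. card (Sa a) * (card T * c^2) + card (Sa a) * c^2)"
  proof (rule sum_mono)
    fix a assume a: "a \<in> H"
    have "(mean (Sa a) f - y)^2 \<le> c^2"
      using mn[OF a] by (metis abs_ge_zero power2_abs power_mono)
    then have "card (Sa a) * (mean (Sa a) f - y)^2 \<le> card (Sa a) * c^2"
      by (intro mult_left_mono) auto
    then show "ss (Sa a) f + card (Sa a) * (mean (Sa a) f - y)^2 \<le> card (Sa a) * (card T * c^2) + card (Sa a) * c^2"
      using ssa[OF a] by (simp add: mult.assoc)
  qed
  also have "\<dots> = (\<Sum>a\<in>H. real (card (Sa a))) * (card T + 1) * c^2"
    by (simp add: sum_distrib_right sum_distrib_left sum.distrib algebra_simps)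
  also have "(\<Sum>a\<in>H. real (card (Sa a))) = card S"
  proof -
    have "(\<Sum>a\<in>H. card (Sa a)) = card S"
      unfolding Sa_def card_eq_sum
      by (rule sum.group) (use fS insert.prems(1) in \<open>auto simp: S_def Bij_def bij_betw_def\<close>)
    then show ?thesis by (metis of_nat_sum)
  qed
  finally show ?case using insert(2) insert(1) by (simp add: S_def algebra_simps)
qed



definition cnt :: "(nat \<Rightarrow> nat) \<Rightarrow> (nat \<Rightarrow> nat) \<Rightarrow> nat \<Rightarrow> ((nat \<times> nat) \<Rightarrow> (nat \<times> nat)) \<Rightarrow> nat \<Rightarrow> nat \<Rightarrow> nat" where
  "cnt dout din n \<omega> i j = card {e \<in> half_edges dout n. fst e = i \<and> \<omega> e \<in> half_edges din n \<and> fst (\<omega> e) = j}"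

lemma trans_P_cnt: "trans_P dout din n \<omega> i j = real (cnt dout din n \<omega> i j) / real (dout i)"
  by (simp add: trans_P_def cnt_def)

lemma half_edges_Sigma: "half_edges d n = Sigma {..<n} (\<lambda>i. {..<d i})"
  by (auto simp: half_edges_def)

lemma finite_half_edges[simp]: "finite (half_edges d n)"
  by (simp add: half_edges_Sigma)

lemma card_half_edges: "card (half_edges d n) = (\<Sum>i<n. d i)"
  by (simp add: half_edges_Sigma)

lemma card_fiber: "i < n \<Longrightarrow> card {e \<in> half_edges d n. fst e = i} = d i"
proof -
  assume i: "i < n"
  have "{e \<in> half_edges d n. fst e = i} = (\<lambda>k. (i, k)) ` {..<d i}"
    using i by (auto simp: half_edges_def)
  moreover have "inj_on (\<lambda>k. (i, k)) {..<d i}" by (auto simp: inj_on_def)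
  ultimately show ?thesis by (simp add: card_image)
qed

lemma half_edges_fst: "e \<in> half_edges d n \<Longrightarrow> fst e < n"
  by (auto simp: half_edges_def)

lemma card_group:
  assumes "finite S" "finite T" "g ` S \<subseteq> T"
  shows "(\<Sum>y\<in>T. card {x \<in> S. g x = y}) = card S"
proof -
  have "(\<Sum>y\<in>T. card {x \<in> S. g x = y}) = (\<Sum>y\<in>T. \<Sum>x | x \<in> S \<and> g x = y. (1::nat))"
    by (simp only: card_eq_sum)
  also have "\<dots> = (\<Sum>x\<in>S. 1)" by (rule sum.group[OF assms])
  also have "\<dots> = card S" by (simp only: card_eq_sum)
  finally show ?thesis .
qed

lemma double_count:
  assumes "F \<subseteq> half_edges dout n"
  shows "(\<Sum>i<n. \<Sum>j<n. card {e \<in> F. fst e = i \<and> \<omega> e \<in> half_edges din n \<and> fst (\<omega> e) = j})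
         = card {e \<in> F. \<omega> e \<in> half_edges din n}"
proof -
  have fF: "finite F" by (rule finite_subset[OF assms]) simp
  have inner: "(\<Sum>j<n. card {e \<in> F. fst e = i \<and> \<omega> e \<in> half_edges din n \<and> fst (\<omega> e) = j})
      = card {e \<in> F. fst e = i \<and> \<omega> e \<in> half_edges din n}" for i
  proof -
    have "(\<Sum>j<n. card {e \<in> F. fst e = i \<and> \<omega> e \<in> half_edges din n \<and> fst (\<omega> e) = j})
       = (\<Sum>j<n. card {x \<in> {e \<in> F. fst e = i \<and> \<omega> e \<in> half_edges din n}. fst (\<omega> x) = j})"
      by (intro sum.cong refl arg_cong[where f=card]) auto
    also have "\<dots> = card {e \<in> F. fst e = i \<and> \<omega> e \<in> half_edges din n}"
      by (rule card_group) (use fF in \<open>auto dest: half_edges_fst\<close>)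
    finally show ?thesis .
  qed
  have "(\<Sum>i<n. \<Sum>j<n. card {e \<in> F. fst e = i \<and> \<omega> e \<in> half_edges din n \<and> fst (\<omega> e) = j})
      = (\<Sum>i<n. card {x \<in> {e \<in> F. \<omega> e \<in> half_edges din n}. fst x = i})"
    unfolding inner by (intro sum.cong refl arg_cong[where f=card]) auto
  also have "\<dots> = card {e \<in> F. \<omega> e \<in> half_edges din n}"
    by (rule card_group) (use fF assms in \<open>auto dest: half_edges_fst\<close>)
  finally show ?thesis .
qed

lemma row_sum:
  assumes "i < n"
  shows "(\<Sum>j<n. cnt dout din n \<omega> i j) \<le> dout i"
proof -
  let ?R = "{e \<in> half_edges dout n. fst e = i \<and> \<omega> e \<in> half_edges din n}"
  have "(\<Sum>j<n. cnt dout din n \<omega> i j) = (\<Sum>j<n. card {x \<in> ?R. fst (\<omega> x) = j})"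
    unfolding cnt_def by (intro sum.cong refl arg_cong[where f=card]) auto
  also have "\<dots> = card ?R"
    by (rule card_group) (auto dest: half_edges_fst)
  also have "\<dots> \<le> card {e \<in> half_edges dout n. fst e = i}" by (rule card_mono) auto
  also have "\<dots> = dout i" using card_fiber[OF assms] .
  finally show ?thesis .
qed

lemma col_sum:
  assumes "\<omega> \<in> envs dout din n" "j < n"
  shows "(\<Sum>i<n. cnt dout din n \<omega> i j) \<le> din j"
proof -
  let ?R = "{e \<in> half_edges dout n. \<omega> e \<in> half_edges din n \<and> fst (\<omega> e) = j}"
  have "(\<Sum>i<n. cnt dout din n \<omega> i j) = (\<Sum>i<n. card {x \<in> ?R. fst x = i})"
    unfolding cnt_def by (intro sum.cong refl arg_cong[where f=card]) auto
  also have "\<dots> = card ?R"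
    by (rule card_group) (auto dest: half_edges_fst)
  also have "\<dots> \<le> card {h \<in> half_edges din n. fst h = j}"
  proof (rule card_inj_on_le)
    show "inj_on \<omega> ?R" using assms(1) by (auto simp: envs_def bij_betw_def inj_on_def)
  qed auto
  also have "\<dots> = din j" using card_fiber[OF assms(2)] .
  finally show ?thesis .
qed

lemma envs_Bij: "envs dout din n = Bij (half_edges dout n) (half_edges din n)"
  by (simp add: envs_def Bij_def)

lemma diff_sum:
  assumes w: "\<omega> \<in> envs dout din n" and ab: "a \<in> half_edges din n" "b \<in> half_edges din n"
  defines "\<omega>' \<equiv> sw (half_edges dout n) a b \<omega>"
  shows "(\<Sum>i<n. \<Sum>j<n. \<bar>real (cnt dout din n \<omega> i j) - real (cnt dout din n \<omega>' i j)\<bar>) \<le> 4"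
proof -
  let ?T = "half_edges dout n" and ?H = "half_edges din n"
  define E where "E = {e \<in> ?T. \<omega> e = a \<or> \<omega> e = b}"
  have ET: "E \<subseteq> ?T" by (auto simp: E_def)
  have fE: "finite E" by (rule finite_subset[OF ET]) simp
  have cE: "card E \<le> 2"
  proof -
    have "card E \<le> card {a, b}"
    proof (rule card_inj_on_le)
      show "inj_on \<omega> E" using w ET by (auto simp: envs_def bij_betw_def intro: inj_on_subset)
    qed (auto simp: E_def)
    also have "\<dots> \<le> 2" by (simp add: card_insert_if)
    finally show ?thesis .
  qed
  have same: "\<omega>' e = \<omega> e" if "e \<in> ?T" "e \<notin> E" for e
    using that by (auto simp: \<omega>'_def sw_def tr_def E_def)
  define A where "A \<phi> i j = {e \<in> ?T. fst e = i \<and> \<phi> e \<in> ?H \<and> fst (\<phi> e) = j}" for \<phi> i j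
  have AE: "A \<omega> i j - E = A \<omega>' i j - E" for i j
    using same by (auto simp: A_def)
  have split: "card (A \<phi> i j) = card {e \<in> E. fst e = i \<and> \<phi> e \<in> ?H \<and> fst (\<phi> e) = j} + card (A \<phi> i j - E)" for \<phi> i j
  proof -
    have "card (A \<phi> i j) = card (A \<phi> i j \<inter> E) + card (A \<phi> i j - E)"
      by (rule card_Int_Diff) (simp add: A_def)
    moreover have "A \<phi> i j \<inter> E = {e \<in> E. fst e = i \<and> \<phi> e \<in> ?H \<and> fst (\<phi> e) = j}"
      using ET by (auto simp: A_def)
    ultimately show ?thesis by simp
  qed
  have pt: "\<bar>real (cnt dout din n \<omega> i j) - real (cnt dout din n \<omega>' i j)\<bar>
     \<le> real (card {e \<in> E. fst e = i \<and> \<omega> e \<in> ?H \<and> fst (\<omega> e) = j})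
       + real (card {e \<in> E. fst e = i \<and> \<omega>' e \<in> ?H \<and> fst (\<omega>' e) = j})" for i j
    using split[of \<omega> i j] split[of \<omega>' i j] AE[of i j]
    by (simp add: cnt_def A_def[symmetric])
  have "(\<Sum>i<n. \<Sum>j<n. \<bar>real (cnt dout din n \<omega> i j) - real (cnt dout din n \<omega>' i j)\<bar>)
     \<le> (\<Sum>i<n. \<Sum>j<n. real (card {e \<in> E. fst e = i \<and> \<omega> e \<in> ?H \<and> fst (\<omega> e) = j})
       + real (card {e \<in> E. fst e = i \<and> \<omega>' e \<in> ?H \<and> fst (\<omega>' e) = j}))"
    by (intro sum_mono pt)
  also have "\<dots> = real (\<Sum>i<n. \<Sum>j<n. card {e \<in> E. fst e = i \<and> \<omega> e \<in> ?H \<and> fst (\<omega> e) = j})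
       + real (\<Sum>i<n. \<Sum>j<n. card {e \<in> E. fst e = i \<and> \<omega>' e \<in> ?H \<and> fst (\<omega>' e) = j})"
    by (simp add: sum.distrib)
  also have "\<dots> = real (card {e \<in> E. \<omega> e \<in> ?H}) + real (card {e \<in> E. \<omega>' e \<in> ?H})"
    by (simp add: double_count[OF ET])
  also have "\<dots> \<le> 2 + 2"
  proof -
    have "card {e \<in> E. \<omega> e \<in> ?H} \<le> card E" "card {e \<in> E. \<omega>' e \<in> ?H} \<le> card E"
      using fE by (auto intro: card_mono)
    then show ?thesis using cE by linarith
  qed
  finally show ?thesis by simp
qed



lemma pi_nonneg: "0 \<le> pi_s dout din n \<omega> s j"
  by (induction s arbitrary: j) (auto simp: trans_P_def intro!: sum_nonneg)

locale chain =
  fixes dout din :: "nat \<Rightarrow> nat" and n :: nat and D :: nat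
  assumes dpos: "\<And>i. i < n \<Longrightarrow> 1 \<le> dout i"
    and dle: "\<And>j. j < n \<Longrightarrow> din j \<le> D"
    and mpos: "0 < num_arcs din n"
    and Dpos: "1 \<le> D"
begin

definition m :: real where "m = real (num_arcs din n)"

lemma m_pos: "0 < m" using mpos by (simp add: m_def)

lemma P_le_cnt: "i < n \<Longrightarrow> trans_P dout din n \<omega> i j \<le> real (cnt dout din n \<omega> i j)"
proof -
  assume i: "i < n"
  have "1 \<le> real (dout i)" using dpos[OF i] by simp
  then show ?thesis unfolding trans_P_cnt
    using divide_left_mono[of 1 "real (dout i)" "real (cnt dout din n \<omega> i j)"] by simp
qed

lemma pi_le:
  assumes w: "\<omega> \<in> envs dout din n"
  shows "j < n \<Longrightarrow> pi_s dout din n \<omega> s j \<le> real D ^ (s + 1) / m"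
proof (induction s arbitrary: j)
  case 0
  have "real (din j) \<le> real D" using dle[OF 0] by simp
  then show ?case using m_pos by (simp add: m_def divide_right_mono)
next
  case (Suc s)
  let ?M = "real D ^ (s + 1) / m"
  have "pi_s dout din n \<omega> (Suc s) j = (\<Sum>i<n. pi_s dout din n \<omega> s i * trans_P dout din n \<omega> i j)"
    by simp
  also have "\<dots> \<le> (\<Sum>i<n. ?M * real (cnt dout din n \<omega> i j))"
  proof (rule sum_mono)
    fix i assume "i \<in> {..<n}"
    then have i: "i < n" by simp
    show "pi_s dout din n \<omega> s i * trans_P dout din n \<omega> i j \<le> ?M * real (cnt dout din n \<omega> i j)"
      by (rule mult_mono[OF Suc.IH[OF i] P_le_cnt[OF i]]) (use m_pos in \<open>auto simp: trans_P_def\<close>)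
  qed
  also have "\<dots> = ?M * real (\<Sum>i<n. cnt dout din n \<omega> i j)"
    by (simp add: sum_distrib_left)
  also have "\<dots> \<le> ?M * real D"
  proof (rule mult_left_mono)
    have "(\<Sum>i<n. cnt dout din n \<omega> i j) \<le> D" using col_sum[OF w Suc.prems] dle[OF Suc.prems] by simp
    then show "real (\<Sum>i<n. cnt dout din n \<omega> i j) \<le> real D" by linarith
  qed (use m_pos in simp)
  also have "\<dots> = real D ^ (Suc s + 1) / m" by simp
  finally show ?case .
qed

lemma delta:
  assumes w: "\<omega> \<in> envs dout din n" and ab: "a \<in> half_edges din n" "b \<in> half_edges din n"
  defines "\<omega>' \<equiv> sw (half_edges dout n) a b \<omega>"
  shows "(\<Sum>j<n. \<bar>pi_s dout din n \<omega> s j - pi_s dout din n \<omega>' s j\<bar>) \<le> 4 * s * real D ^ s / m"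
proof (induction s)
  case 0
  then show ?case by simp
next
  case (Suc s)
  let ?p = "pi_s dout din n \<omega> s" and ?q = "pi_s dout din n \<omega>' s"
  let ?P = "trans_P dout din n \<omega>" and ?P' = "trans_P dout din n \<omega>'"
  let ?M = "real D ^ (s + 1) / m"
  have w': "\<omega>' \<in> envs dout din n" unfolding \<omega>'_def envs_Bij using w ab by (intro sw_Bij) (auto simp: envs_Bij)
  have pt: "\<bar>pi_s dout din n \<omega> (Suc s) j - pi_s dout din n \<omega>' (Suc s) j\<bar>
      \<le> (\<Sum>i<n. \<bar>?p i - ?q i\<bar> * ?P' i j) + (\<Sum>i<n. ?p i * \<bar>?P i j - ?P' i j\<bar>)" for j
  proof -
    have eq: "pi_s dout din n \<omega> (Suc s) j - pi_s dout din n \<omega>' (Suc s) j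
        = (\<Sum>i<n. (?p i - ?q i) * ?P' i j) + (\<Sum>i<n. ?p i * (?P i j - ?P' i j))"
    proof -
      have "(\<Sum>i<n. (?p i - ?q i) * ?P' i j) + (\<Sum>i<n. ?p i * (?P i j - ?P' i j))
          = (\<Sum>i<n. (?p i - ?q i) * ?P' i j + ?p i * (?P i j - ?P' i j))"
        by (rule sum.distrib[symmetric])
      also have "\<dots> = (\<Sum>i<n. ?p i * ?P i j - ?q i * ?P' i j)"
        by (rule sum.cong) (simp_all add: algebra_simps)
      also have "\<dots> = (\<Sum>i<n. ?p i * ?P i j) - (\<Sum>i<n. ?q i * ?P' i j)"
        by (rule sum_subtractf)
      finally show ?thesis by simp
    qed
    have "\<bar>(\<Sum>i<n. (?p i - ?q i) * ?P' i j) + (\<Sum>i<n. ?p i * (?P i j - ?P' i j))\<bar>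
       \<le> \<bar>\<Sum>i<n. (?p i - ?q i) * ?P' i j\<bar> + \<bar>\<Sum>i<n. ?p i * (?P i j - ?P' i j)\<bar>"
      by (rule abs_triangle_ineq)
    also have "\<dots> \<le> (\<Sum>i<n. \<bar>?p i - ?q i\<bar> * ?P' i j) + (\<Sum>i<n. ?p i * \<bar>?P i j - ?P' i j\<bar>)"
    proof (rule add_mono)
      show "\<bar>\<Sum>i<n. (?p i - ?q i) * ?P' i j\<bar> \<le> (\<Sum>i<n. \<bar>?p i - ?q i\<bar> * ?P' i j)"
        using sum_abs[of "\<lambda>i. (?p i - ?q i) * ?P' i j" "{..<n}"]
        by (simp add: abs_mult trans_P_def)
      show "\<bar>\<Sum>i<n. ?p i * (?P i j - ?P' i j)\<bar> \<le> (\<Sum>i<n. ?p i * \<bar>?P i j - ?P' i j\<bar>)"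
        using sum_abs[of "\<lambda>i. ?p i * (?P i j - ?P' i j)" "{..<n}"]
        by (simp add: abs_mult pi_nonneg)
    qed
    finally show ?thesis unfolding eq .
  qed
  have "(\<Sum>j<n. \<bar>pi_s dout din n \<omega> (Suc s) j - pi_s dout din n \<omega>' (Suc s) j\<bar>)
      \<le> (\<Sum>j<n. (\<Sum>i<n. \<bar>?p i - ?q i\<bar> * ?P' i j) + (\<Sum>i<n. ?p i * \<bar>?P i j - ?P' i j\<bar>))"
    by (rule sum_mono) (rule pt)
  also have "\<dots> = (\<Sum>i<n. \<bar>?p i - ?q i\<bar> * (\<Sum>j<n. ?P' i j)) + (\<Sum>i<n. ?p i * (\<Sum>j<n. \<bar>?P i j - ?P' i j\<bar>))"
  proof -
    have "(\<Sum>j<n. \<Sum>i<n. \<bar>?p i - ?q i\<bar> * ?P' i j) = (\<Sum>i<n. \<Sum>j<n. \<bar>?p i - ?q i\<bar> * ?P' i j)"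
      by (rule sum.swap)
    moreover have "(\<Sum>j<n. \<Sum>i<n. ?p i * \<bar>?P i j - ?P' i j\<bar>) = (\<Sum>i<n. \<Sum>j<n. ?p i * \<bar>?P i j - ?P' i j\<bar>)"
      by (rule sum.swap)
    ultimately show ?thesis by (simp only: sum.distrib sum_distrib_left)
  qed
  also have "\<dots> \<le> (\<Sum>i<n. \<bar>?p i - ?q i\<bar>) + (\<Sum>i<n. ?M * (\<Sum>j<n. \<bar>real (cnt dout din n \<omega> i j) - real (cnt dout din n \<omega>' i j)\<bar>))"
  proof (rule add_mono; rule sum_mono)
    fix i assume "i \<in> {..<n}"
    then have i: "i < n" by simp
    have d1: "1 \<le> real (dout i)" using dpos[OF i] by simp
    have "(\<Sum>j<n. ?P' i j) = real (\<Sum>j<n. cnt dout din n \<omega>' i j) / real (dout i)"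
      by (simp add: trans_P_cnt sum_divide_distrib)
    also have "\<dots> \<le> 1"
    proof -
      have "real (\<Sum>j<n. cnt dout din n \<omega>' i j) \<le> real (dout i)"
        using row_sum[OF i, of dout din \<omega>'] by (simp only: of_nat_le_iff)
      then show ?thesis using d1 by (simp del: of_nat_sum add: divide_le_eq_1)
    qed
    finally have "(\<Sum>j<n. ?P' i j) \<le> 1" .
    then show "\<bar>?p i - ?q i\<bar> * (\<Sum>j<n. ?P' i j) \<le> \<bar>?p i - ?q i\<bar>"
      by (simp add: mult_left_le)
    have "(\<Sum>j<n. \<bar>?P i j - ?P' i j\<bar>) \<le> (\<Sum>j<n. \<bar>real (cnt dout din n \<omega> i j) - real (cnt dout din n \<omega>' i j)\<bar>)"
    proof (rule sum_mono)
      fix j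
      have "\<bar>?P i j - ?P' i j\<bar> = \<bar>real (cnt dout din n \<omega> i j) - real (cnt dout din n \<omega>' i j)\<bar> / real (dout i)"
        by (simp add: trans_P_cnt diff_divide_distrib[symmetric])
      also have "\<dots> \<le> \<bar>real (cnt dout din n \<omega> i j) - real (cnt dout din n \<omega>' i j)\<bar>"
        using d1 by (simp add: divide_le_eq mult_le_cancel_left1)
      finally show "\<bar>?P i j - ?P' i j\<bar> \<le> \<bar>real (cnt dout din n \<omega> i j) - real (cnt dout din n \<omega>' i j)\<bar>" .
    qed
    then show "?p i * (\<Sum>j<n. \<bar>?P i j - ?P' i j\<bar>) \<le> ?M * (\<Sum>j<n. \<bar>real (cnt dout din n \<omega> i j) - real (cnt dout din n \<omega>' i j)\<bar>)"
      by (intro mult_mono pi_le[OF w i]) (use m_pos in \<open>auto simp: pi_nonneg intro: sum_nonneg\<close>)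
  qed
  also have "\<dots> \<le> 4 * s * real D ^ s / m + ?M * 4"
  proof (rule add_mono)
    show "(\<Sum>i<n. \<bar>?p i - ?q i\<bar>) \<le> 4 * s * real D ^ s / m" using Suc.IH by simp
    have "(\<Sum>i<n. ?M * (\<Sum>j<n. \<bar>real (cnt dout din n \<omega> i j) - real (cnt dout din n \<omega>' i j)\<bar>))
        = ?M * (\<Sum>i<n. \<Sum>j<n. \<bar>real (cnt dout din n \<omega> i j) - real (cnt dout din n \<omega>' i j)\<bar>)"
      by (simp add: sum_distrib_left)
    also have "\<dots> \<le> ?M * 4"
      by (rule mult_left_mono) (use diff_sum[OF w ab] m_pos in \<open>auto simp: \<omega>'_def\<close>)
    finally show "(\<Sum>i<n. ?M * (\<Sum>j<n. \<bar>real (cnt dout din n \<omega> i j) - real (cnt dout din n \<omega>' i j)\<bar>)) \<le> ?M * 4" .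
  qed
  also have "\<dots> \<le> 4 * real (Suc s) * real D ^ Suc s / m"
  proof -
    have "real D ^ s \<le> real D ^ Suc s" using Dpos by (simp add: power_increasing)
    then have "4 * s * real D ^ s \<le> 4 * s * real D ^ Suc s" by (simp add: mult_left_mono)
    then have "4 * s * real D ^ s + real D ^ (s + 1) * 4 \<le> 4 * real (Suc s) * real D ^ Suc s"
      by (simp add: algebra_simps)
    then have "(4 * s * real D ^ s + real D ^ (s + 1) * 4) / m \<le> 4 * real (Suc s) * real D ^ Suc s / m"
      using m_pos by (simp add: divide_right_mono)
    then show ?thesis by (simp add: add_divide_distrib)
  qed
  finally show ?case .
qed

lemma tv_lip:
  assumes w: "\<omega> \<in> envs dout din n" and ab: "a \<in> half_edges din n" "b \<in> half_edges din n"
  shows "\<bar>tv_dist n (pi_s dout din n \<omega> s1) (pi_s dout din n \<omega> s2)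
          - tv_dist n (pi_s dout din n (sw (half_edges dout n) a b \<omega>) s1) (pi_s dout din n (sw (half_edges dout n) a b \<omega>) s2)\<bar>
         \<le> 2 * (s1 * real D ^ s1 + s2 * real D ^ s2) / m"
proof -
  define \<omega>' where "\<omega>' = sw (half_edges dout n) a b \<omega>"
  let ?p = "pi_s dout din n \<omega>" and ?q = "pi_s dout din n \<omega>'"
  have "\<bar>tv_dist n (?p s1) (?p s2) - tv_dist n (?q s1) (?q s2)\<bar>
      = (1/2) * \<bar>\<Sum>j<n. \<bar>?p s1 j - ?p s2 j\<bar> - \<bar>?q s1 j - ?q s2 j\<bar>\<bar>"
  proof -
    have "tv_dist n (?p s1) (?p s2) - tv_dist n (?q s1) (?q s2)
        = (1/2) * (\<Sum>j<n. \<bar>?p s1 j - ?p s2 j\<bar> - \<bar>?q s1 j - ?q s2 j\<bar>)"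
      unfolding tv_dist_def sum_subtractf right_diff_distrib ..
    then show ?thesis by (simp only: abs_mult)
  qed
  also have "\<dots> \<le> (1/2) * (\<Sum>j<n. \<bar>?p s1 j - ?q s1 j\<bar> + \<bar>?p s2 j - ?q s2 j\<bar>)"
  proof (rule mult_left_mono)
    have "\<bar>\<Sum>j<n. \<bar>?p s1 j - ?p s2 j\<bar> - \<bar>?q s1 j - ?q s2 j\<bar>\<bar>
        \<le> (\<Sum>j<n. \<bar>\<bar>?p s1 j - ?p s2 j\<bar> - \<bar>?q s1 j - ?q s2 j\<bar>\<bar>)" by (rule sum_abs)
    also have "\<dots> \<le> (\<Sum>j<n. \<bar>?p s1 j - ?q s1 j\<bar> + \<bar>?p s2 j - ?q s2 j\<bar>)"
      by (rule sum_mono) linarith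
    finally show "\<bar>\<Sum>j<n. \<bar>?p s1 j - ?p s2 j\<bar> - \<bar>?q s1 j - ?q s2 j\<bar>\<bar>
        \<le> (\<Sum>j<n. \<bar>?p s1 j - ?q s1 j\<bar> + \<bar>?p s2 j - ?q s2 j\<bar>)" .
  qed simp
  also have "\<dots> = (1/2) * ((\<Sum>j<n. \<bar>?p s1 j - ?q s1 j\<bar>) + (\<Sum>j<n. \<bar>?p s2 j - ?q s2 j\<bar>))"
    by (simp add: sum.distrib)
  also have "\<dots> \<le> (1/2) * (4 * s1 * real D ^ s1 / m + 4 * s2 * real D ^ s2 / m)"
    by (intro mult_left_mono add_mono) (auto simp: \<omega>'_def intro: delta[OF w ab])
  also have "\<dots> = 2 * (s1 * real D ^ s1 + s2 * real D ^ s2) / m"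
    by (simp add: add_divide_distrib algebra_simps)
  finally show ?thesis by (simp add: \<omega>'_def)
qed

end


lemma cheb:
  fixes \<epsilon> :: real and f :: "'a \<Rightarrow> real"
  assumes fS: "finite S" and ne: "S \<noteq> {}" and e: "\<epsilon> > 0"
  shows "measure_pmf.prob (pmf_of_set S) {\<omega>. \<bar>f \<omega> - measure_pmf.expectation (pmf_of_set S) f\<bar> > \<epsilon>}
         \<le> ss S f / (card S * \<epsilon>^2)"
proof -
  have E: "measure_pmf.expectation (pmf_of_set S) f = mean S f"
    using integral_pmf_of_set[OF ne fS] by (simp add: mean_def)
  define A where "A = {\<omega>. \<bar>f \<omega> - mean S f\<bar> > \<epsilon>}"
  have cS: "0 < card S" using fS ne by (simp add: card_gt_0_iff)
  have P: "measure_pmf.prob (pmf_of_set S) A = card (S \<inter> A) / card S"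
    by (rule measure_pmf_of_set[OF ne fS])
  have "real (card (S \<inter> A)) * \<epsilon>^2 = (\<Sum>\<omega>\<in>S \<inter> A. \<epsilon>^2)" by simp
  also have "\<dots> \<le> (\<Sum>\<omega>\<in>S \<inter> A. (f \<omega> - mean S f)^2)"
  proof (rule sum_mono)
    fix \<omega> assume "\<omega> \<in> S \<inter> A"
    then have "\<epsilon> < \<bar>f \<omega> - mean S f\<bar>" by (simp add: A_def)
    then have "\<epsilon>^2 \<le> \<bar>f \<omega> - mean S f\<bar>^2" using e by (intro power_mono) auto
    then show "\<epsilon>^2 \<le> (f \<omega> - mean S f)^2" by simp
  qed
  also have "\<dots> \<le> ss S f" unfolding ss_def
    by (rule sum_mono2) (use fS in auto)
  finally have "real (card (S \<inter> A)) * \<epsilon>^2 \<le> ss S f" .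
  then have "card (S \<inter> A) / card S \<le> ss S f / (card S * \<epsilon>^2)"
    using cS e by (simp add: field_simps)
  then show ?thesis using P E by (simp add: A_def)
qed

lemma ln2_ge: "1/2 \<le> ln (2::real)"
proof -
  have "ln (1/2::real) \<le> 1/2 - 1" by (rule ln_le_minus_one) simp
  then show ?thesis by (simp add: ln_div)
qed

lemma hor_bounds:
  fixes n \<Delta> :: nat
  assumes n: "1 \<le> n" and d: "2 \<le> \<Delta>"
  defines "h \<equiv> nat \<lfloor>ln (real n) / (10 * ln (real \<Delta>))\<rfloor>"
  shows "real h \<le> ln n" and "real \<Delta> ^ h \<le> real n powr (1/10)"
proof -
  have lD: "1/2 \<le> ln (real \<Delta>)"
  proof -
    have "ln 2 \<le> ln (real \<Delta>)" using d by simp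
    then show ?thesis using ln2_ge by linarith
  qed
  have ln0: "0 \<le> ln (real n)" using n by simp
  have x0: "0 \<le> ln (real n) / (10 * ln (real \<Delta>))" using lD ln0 by simp
  have hx: "real h \<le> ln (real n) / (10 * ln (real \<Delta>))"
    unfolding h_def using x0 by (simp add: of_nat_nat)
  have "ln (real n) / (10 * ln (real \<Delta>)) \<le> ln n"
    using lD ln0 by (simp add: divide_le_eq mult_le_cancel_left1 mult_left_mono[of 1 "10 * ln (real \<Delta>)" "ln n", simplified])
  then show "real h \<le> ln n" using hx by linarith
  have "real h * ln (real \<Delta>) \<le> ln (real n) / 10"
    using hx lD by (simp add: le_divide_eq mult.commute)
  then have "exp (real h * ln (real \<Delta>)) \<le> exp (ln (real n) / 10)" by simp
  moreover have "exp (real h * ln (real \<Delta>)) = real \<Delta> ^ h"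
    using d by (simp add: exp_of_nat_mult)
  moreover have "exp (ln (real n) / 10) = real n powr (1/10)"
    using n by (simp add: powr_def)
  ultimately show "real \<Delta> ^ h \<le> real n powr (1/10)" by simp
qed


lemma per_n:
  fixes dout din :: "nat \<Rightarrow> nat" and n t D0 :: nat and \<epsilon> :: real
  assumes bal: "(\<Sum>i<n. din i) = (\<Sum>i<n. dout i)"
    and md: "\<And>i. i < n \<Longrightarrow> 2 \<le> din i \<and> 2 \<le> dout i"
    and bd: "\<And>i. i < n \<Longrightarrow> din i \<le> D0 \<and> dout i \<le> D0"
    and n1: "1 \<le> n" and e: "\<epsilon> > 0"
  shows "measure_pmf.prob (pmf_of_set (envs dout din n))
            {\<omega>. \<bar>tv_ht dout din n t \<omega>
                 - measure_pmf.expectation (pmf_of_set (envs dout din n)) (tv_ht dout din n t)\<bar> > \<epsilon>}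
         \<le> 2 * (ln n * real n powr (1/10) + t * real D0 ^ t)^2 / (n * \<epsilon>^2)"
proof -
  define \<Delta> where "\<Delta> = max_deg dout din n"
  let ?I = "(\<lambda>i. max (dout i) (din i)) ` {..<n}"
  have fI: "finite ?I" by simp
  have "0 \<in> {..<n}" using n1 by simp
  then have neI: "?I \<noteq> {}" by blast
  have le\<Delta>: "din j \<le> \<Delta> \<and> dout j \<le> \<Delta>" if "j < n" for j
  proof -
    have "max (dout j) (din j) \<le> \<Delta>" unfolding \<Delta>_def max_deg_def
      by (rule Max_ge[OF fI]) (use that in auto)
    then show ?thesis by simp
  qed
  have \<Delta>D0: "\<Delta> \<le> D0" unfolding \<Delta>_def max_deg_def
    using bd by (subst Max_le_iff[OF fI neI]) auto
  have \<Delta>2: "2 \<le> \<Delta>" using le\<Delta>[of 0] md[of 0] n1 by auto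
  have m2n: "2 * n \<le> num_arcs din n"
  proof -
    have "(\<Sum>i<n. (2::nat)) \<le> (\<Sum>i<n. din i)" by (rule sum_mono) (use md in auto)
    then show ?thesis by (simp add: num_arcs_def)
  qed
  interpret chain dout din n \<Delta>
  proof unfold_locales
    fix i assume "i < n" then show "1 \<le> dout i" using md[of i] by linarith
  qed (use le\<Delta> m2n n1 \<Delta>2 in auto)
  let ?T = "half_edges dout n" and ?H = "half_edges din n"
  define S where "S = envs dout din n"
  have SB: "S = Bij ?T ?H" by (simp add: S_def envs_Bij)
  have cT: "card ?T = num_arcs din n" using bal by (simp add: card_half_edges num_arcs_def)
  have cTH: "card ?T = card ?H" using bal by (simp add: card_half_edges)
  have fS: "finite S" unfolding SB by (simp add: finite_Bij)
  have neS: "S \<noteq> {}"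
  proof -
    obtain g where g: "bij_betw g ?T ?H" using finite_same_card_bij[OF _ _ cTH] by auto
    have "bij_betw (restrict g ?T) ?T ?H"
      by (rule bij_betw_cong[THEN iffD1, OF _ g]) simp
    then have "restrict g ?T \<in> S" by (simp add: SB Bij_def)
    then show ?thesis by auto
  qed
  define h where "h = hor dout din n"
  define c where "c = 2 * (h * real \<Delta> ^ h + t * real \<Delta> ^ t) / m"
  define f where "f = tv_ht dout din n t"
  have c0: "0 \<le> c" using m_pos by (simp add: c_def)
  have lip: "\<bar>f \<omega> - f (sw ?T a b \<omega>)\<bar> \<le> c" if "\<omega> \<in> Bij ?T ?H" "a \<in> ?H" "b \<in> ?H" for \<omega> a b
    using tv_lip[of \<omega> a b h t] that unfolding f_def c_def tv_ht_def h_def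
    by (simp add: envs_Bij)
  have ssb: "ss S f \<le> card S * card ?T * c^2"
    unfolding SB by (rule var_bound) (use cTH c0 lip in auto)
  have "measure_pmf.prob (pmf_of_set S) {\<omega>. \<bar>f \<omega> - measure_pmf.expectation (pmf_of_set S) f\<bar> > \<epsilon>}
      \<le> ss S f / (card S * \<epsilon>^2)" by (rule cheb[OF fS neS e])
  also have "\<dots> \<le> card S * card ?T * c^2 / (card S * \<epsilon>^2)"
    using ssb fS neS e by (intro divide_right_mono) (auto simp: card_gt_0_iff)
  also have "\<dots> = m * c^2 / \<epsilon>^2"
    using fS neS by (simp add: cT m_def card_gt_0_iff)
  also have "\<dots> = 4 * (h * real \<Delta> ^ h + t * real \<Delta> ^ t)^2 / (m * \<epsilon>^2)"
  proof -
    have "m * (2 * X / m)^2 / \<epsilon>^2 = 4 * X^2 / (m * \<epsilon>^2)" for X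
      using m_pos e by (simp add: power2_eq_square field_simps)
    then show ?thesis unfolding c_def .
  qed
  also have "\<dots> \<le> 4 * (ln n * real n powr (1/10) + t * real D0 ^ t)^2 / (2 * real n * \<epsilon>^2)"
  proof (rule frac_le)
    have hb: "real h \<le> ln n" "real \<Delta> ^ h \<le> real n powr (1/10)"
      using hor_bounds[OF n1 \<Delta>2] by (simp_all add: h_def hor_def \<Delta>_def)
    have "h * real \<Delta> ^ h \<le> ln n * real n powr (1/10)"
      by (rule mult_mono) (use hb in auto)
    moreover have "t * real \<Delta> ^ t \<le> t * real D0 ^ t"
      using \<Delta>D0 by (intro mult_left_mono power_mono) auto
    ultimately have "h * real \<Delta> ^ h + t * real \<Delta> ^ t \<le> ln n * real n powr (1/10) + t * real D0 ^ t"
      by linarith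
    moreover have "0 \<le> h * real \<Delta> ^ h + t * real \<Delta> ^ t" by simp
    ultimately show "4 * (h * real \<Delta> ^ h + t * real \<Delta> ^ t)^2 \<le> 4 * (ln n * real n powr (1/10) + t * real D0 ^ t)^2"
      by (simp add: power_mono)
    show "0 \<le> 4 * (ln n * real n powr (1/10) + t * real D0 ^ t)^2" by simp
    show "0 < 2 * real n * \<epsilon>^2" using n1 e by simp
    have "2 * real n \<le> m" using m2n by (simp add: m_def)
    then show "2 * real n * \<epsilon>^2 \<le> m * \<epsilon>^2" using e by (simp add: mult_right_mono)
  qed
  also have "\<dots> = 2 * (ln n * real n powr (1/10) + t * real D0 ^ t)^2 / (n * \<epsilon>^2)"
    by (simp add: field_simps)
  finally show ?thesis by (simp add: S_def f_def)
qed

lemma lim_aux: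
  fixes K \<epsilon> :: real
  shows "(\<lambda>n::nat. 2 * (ln (real n) * real n powr (1/10) + K)^2 / (real n * \<epsilon>^2)) \<longlonglongrightarrow> 0"
proof -
  have "(\<lambda>n::nat. 2 * (ln (real n) * real n powr (1/10) + K)^2 / real n) \<longlonglongrightarrow> 0"
    by real_asymp
  then have "(\<lambda>n::nat. (2 * (ln (real n) * real n powr (1/10) + K)^2 / real n) * (1 / \<epsilon>^2)) \<longlonglongrightarrow> 0"
    by (rule tendsto_mult_left_zero)
  then show ?thesis by simp
qed


theorem lemma5:
  fixes dout din :: "nat \<Rightarrow> nat \<Rightarrow> nat" and t :: nat
  assumes balanced: "\<And>n. (\<Sum>i<n. din n i) = (\<Sum>i<n. dout n i)"
    and min_deg: "\<And>n i. i < n \<Longrightarrow> 2 \<le> din n i \<and> 2 \<le> dout n i"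
    and bounded: "\<exists>D. \<forall>n i. i < n \<longrightarrow> din n i \<le> D \<and> dout n i \<le> D"
  shows "\<forall>\<epsilon>>0. (\<lambda>n. measure_pmf.prob (pmf_of_set (envs (dout n) (din n) n))
            {\<omega>. \<bar>tv_ht (dout n) (din n) n t \<omega>
                 - measure_pmf.expectation (pmf_of_set (envs (dout n) (din n) n))
                     (tv_ht (dout n) (din n) n t)\<bar> > \<epsilon>}) \<longlonglongrightarrow> 0"
proof (intro allI impI)
  fix \<epsilon> :: real assume e: "\<epsilon> > 0"
  obtain D0 where D0: "\<forall>n i. i < n \<longrightarrow> din n i \<le> D0 \<and> dout n i \<le> D0" using bounded by blast
  let ?g = "\<lambda>n::nat. 2 * (ln (real n) * real n powr (1/10) + real t * real D0 ^ t)^2 / (real n * \<epsilon>^2)"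
  let ?f = "\<lambda>n. measure_pmf.prob (pmf_of_set (envs (dout n) (din n) n))
            {\<omega>. \<bar>tv_ht (dout n) (din n) n t \<omega>
                 - measure_pmf.expectation (pmf_of_set (envs (dout n) (din n) n))
                     (tv_ht (dout n) (din n) n t)\<bar> > \<epsilon>}"
  have ev1: "eventually (\<lambda>n. (\<lambda>_. 0::real) n \<le> ?f n) sequentially" by simp
  have ev2: "eventually (\<lambda>n. ?f n \<le> ?g n) sequentially"
    using eventually_ge_at_top[of 1]
  proof (rule eventually_mono)
    fix n :: nat assume n: "1 \<le> n"
    show "?f n \<le> ?g n"
      by (rule per_n[OF balanced min_deg _ n e, of D0 t]) (use D0 in auto)
  qed
  have "?g \<longlonglongrightarrow> 0" by (rule lim_aux)
  then show "?f \<longlonglongrightarrow> 0"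
    by (rule tendsto_sandwich[OF ev1 ev2 tendsto_const])
qed

end
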